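(* Let $\{c_n\}_{n\ge1}$ be a real sequence, $\{d_{n+1}\}_{n\ge1}$ a positive chain sequence, and let $P_0(x)=1$, $P_1(x)=x-c_1$, $P_{n+1}(x)=(x-c_{n+1})P_n(x)-d_{n+1}(x^2+1)P_{n-1}(x)$ for $n\ge1$. Let $u_0(x)=1$, $u_n(x)=\dfrac{(-1)^n}{(x-i)^n\prod_{j=1}^n\sqrt{d_{j+1}}}P_n(x)$ for $n\ge1$, $\mathbf u_n(x)=[u_0(x),\dots,u_{n-1}(x)]^T$, and let $\mathbf B_n$ be the $n\times n$ real symmetric tridiagonal matrix with diagonal entries $1$ and $(\mathbf B_n)_{k,k+1}=(\mathbf B_n)_{k+1,k}=\sqrt{d_{k+1}}$, $k=1,\dots,n-1$. For real $x\ne y$ let \[ G_n(x,y)=\frac{P_n(x)P_{n-1}(y)-P_{n-1}(x)P_n(y)}{x-y},\qquad n\ge1, \] and let $\mathcal G_n(x)=P_n'(x)P_{n-1}(x)-P_{n-1}'(x)P_n(x)$. Then $G_1(x,y)=1$ and, for $n\ge2$ and real $x\neq y$, \[ \frac{G_n(x,y)}{(x-i)^{n-1}(y+i)^{n-1}d_2d_3\cdots d_n}=\mathbf u_n(y)^H\mathbf B_n\mathbf u_n(x). \] Moreover, for $n\ge2$ and all real $x$, \[ \frac{\mathcal G_n(x)}{(x^2+1)^{n-1}d_2d_3\cdots d_n}=\mathbf u_n(x)^H\mathbf B_n\mathbf u_n(x)>0 . \]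
   Context: A sequence $\{d_{n+1}\}_{n\ge1}$ is a positive chain sequence if there is a sequence $\{g_{n+1}\}_{n\ge0}$ with $0\le g_1<1$, $0<g_n<1$ for $n\ge2$, and $d_{n+1}=(1-g_n)g_{n+1}$ for $n\ge1$. $\mathbf v^H$ denotes the conjugate transpose. *)

theory Defs
  imports Complex_Main "HOL-Computational_Algebra.Polynomial" "Jordan_Normal_Form.Matrix"
begin

definition positive_chain_seq :: "(nat \<Rightarrow> real) \<Rightarrow> bool" where
  "positive_chain_seq d \<longleftrightarrow> (\<exists>g :: nat \<Rightarrow> real.
     0 \<le> g 1 \<and> g 1 < 1 \<and> (\<forall>n\<ge>2. 0 < g n \<and> g n < 1) \<and>
     (\<forall>n\<ge>1. d (n+1) = (1 - g n) * g (n+1)))"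

text \<open>The polynomials P_n (with c indexed from 1 and d from 2).\<close>
fun Ppoly :: "(nat \<Rightarrow> real) \<Rightarrow> (nat \<Rightarrow> real) \<Rightarrow> nat \<Rightarrow> real poly" where
  "Ppoly c d 0 = 1"
| "Ppoly c d (Suc 0) = [:- c 1, 1:]"
| "Ppoly c d (Suc (Suc n)) =
     [:- c (n+2), 1:] * Ppoly c d (Suc n) - Polynomial.smult (d (n+2)) ([:1, 0, 1:] * Ppoly c d n)"

definition uf :: "(nat \<Rightarrow> real) \<Rightarrow> (nat \<Rightarrow> real) \<Rightarrow> nat \<Rightarrow> real \<Rightarrow> complex" where
  "uf c d n x = (if n = 0 then 1 else
     (-1)^n / ((complex_of_real x - \<i>)^n * complex_of_real (\<Prod>j=1..n. sqrt (d (j+1))))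
       * complex_of_real (poly (Ppoly c d n) x))"

definition uvec :: "(nat \<Rightarrow> real) \<Rightarrow> (nat \<Rightarrow> real) \<Rightarrow> nat \<Rightarrow> real \<Rightarrow> complex vec" where
  "uvec c d n x = vec n (\<lambda>k. uf c d k x)"

text \<open>B_n with 0-based indices: row/column k here is k+1 in the paper,
  so (B_n)_{k+1,k+2} = sqrt(d_{k+2}).\<close>
definition Bmat :: "(nat \<Rightarrow> real) \<Rightarrow> nat \<Rightarrow> complex mat" where
  "Bmat d n = mat n n (\<lambda>(k, l).
     if k = l then 1
     else if l = k + 1 then complex_of_real (sqrt (d (k+2)))
     else if k = l + 1 then complex_of_real (sqrt (d (l+2)))
     else 0)"

definition Gfun :: "(nat \<Rightarrow> real) \<Rightarrow> (nat \<Rightarrow> real) \<Rightarrow> nat \<Rightarrow> real \<Rightarrow> real \<Rightarrow> real" where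
  "Gfun c d n x y = (poly (Ppoly c d n) x * poly (Ppoly c d (n-1)) y
      - poly (Ppoly c d (n-1)) x * poly (Ppoly c d n) y) / (x - y)"

definition Gcal :: "(nat \<Rightarrow> real) \<Rightarrow> (nat \<Rightarrow> real) \<Rightarrow> nat \<Rightarrow> real \<Rightarrow> real" where
  "Gcal c d n x = poly (pderiv (Ppoly c d n)) x * poly (Ppoly c d (n-1)) x
      - poly (pderiv (Ppoly c d (n-1))) x * poly (Ppoly c d n) x"

end

theory Submission
  imports Defs
begin


definition bb :: "(nat \<Rightarrow> real) \<Rightarrow> nat \<Rightarrow> nat \<Rightarrow> complex" where
  "bb d k l = (if k = l then 1
     else if l = k + 1 then complex_of_real (sqrt (d (k+2)))
     else if k = l + 1 then complex_of_real (sqrt (d (l+2)))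
     else 0)"

lemma Q_sum:
  "conjugate (uvec c d n y) \<bullet> (Bmat d n *\<^sub>v uvec c d n x)
   = (\<Sum>k<n. \<Sum>l<n. cnj (uf c d k y) * (bb d k l * uf c d l x))"
  unfolding scalar_prod_def uvec_def Bmat_def mult_mat_vec_def
  by (auto simp: bb_def lessThan_atLeast0 sum_distrib_left intro!: sum.cong)

lemma col_delta:
  assumes "n \<ge> 1"
  shows "(\<Sum>k<n. F k * bb d k n) = F (n-1) * complex_of_real (sqrt (d (n+1)))"
proof -
  have "(\<Sum>k<n. F k * bb d k n) = (\<Sum>k<n. if k = n-1 then F (n-1) * complex_of_real (sqrt (d (n+1))) else 0)"
    using assms by (intro sum.cong) (auto simp: bb_def)
  also have "\<dots> = F (n-1) * complex_of_real (sqrt (d (n+1)))" using assms by simp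
  finally show ?thesis .
qed

lemma row_delta:
  assumes "n \<ge> 1"
  shows "(\<Sum>l<n. bb d n l * F l) = complex_of_real (sqrt (d (n+1))) * F (n-1)"
proof -
  have "(\<Sum>l<n. bb d n l * F l) = (\<Sum>l<n. if l = n-1 then complex_of_real (sqrt (d (n+1))) * F (n-1) else 0)"
    using assms by (intro sum.cong) (auto simp: bb_def)
  also have "\<dots> = complex_of_real (sqrt (d (n+1))) * F (n-1)" using assms by simp
  finally show ?thesis .
qed

lemma QS_rec:
  assumes "n \<ge> 1"
  shows "(\<Sum>k<Suc n. \<Sum>l<Suc n. f k * (bb d k l * g l))
     = (\<Sum>k<n. \<Sum>l<n. f k * (bb d k l * g l)) + f n * g n
       + complex_of_real (sqrt (d (n+1))) * (f (n-1) * g n + f n * g (n-1))"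
proof -
  have "(\<Sum>k<Suc n. \<Sum>l<Suc n. f k * (bb d k l * g l))
    = (\<Sum>k<n. \<Sum>l<n. f k * (bb d k l * g l)) + (\<Sum>k<n. (f k * g n) * bb d k n)
      + f n * (\<Sum>l<n. bb d n l * g l) + f n * (bb d n n * g n)"
    by (simp add: sum.distrib sum_distrib_left algebra_simps)
  also have "\<dots> = (\<Sum>k<n. \<Sum>l<n. f k * (bb d k l * g l)) + f (n-1) * g n * complex_of_real (sqrt (d (n+1)))
      + f n * (complex_of_real (sqrt (d (n+1))) * g (n-1)) + f n * g n"
    using assms by (simp add: col_delta[OF assms] row_delta[OF assms]) (simp add: bb_def)
  finally show ?thesis by (simp add: algebra_simps)
qed

lemma Q_1: "(\<Sum>k<1. \<Sum>l<1. f k * (bb d k l * g l)) = f 0 * g 0"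
  by (simp add: bb_def)

definition sprod :: "(nat \<Rightarrow> real) \<Rightarrow> nat \<Rightarrow> real" where
  "sprod d n = (\<Prod>j=1..n. sqrt (d (j+1)))"

lemma uf_eq: "uf c d n x = (-1)^n / ((complex_of_real x - \<i>)^n * complex_of_real (sprod d n))
       * complex_of_real (poly (Ppoly c d n) x)"
  by (simp add: uf_def sprod_def)

lemma uf_cnj: "cnj (uf c d n x) = (-1)^n / ((complex_of_real x + \<i>)^n * complex_of_real (sprod d n))
       * complex_of_real (poly (Ppoly c d n) x)"
  by (simp add: uf_eq)

lemma sprod_Suc: "sprod d (Suc n) = sprod d n * sqrt (d (n+2))"
  by (simp add: sprod_def)

lemma Dprod_Suc: "(\<Prod>j=2..Suc (Suc n). d j) = (\<Prod>j=2..Suc n. d j) * d (n+2)"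
  by (subst prod.nat_ivl_Suc') (auto simp: mult_ac)

lemma sprod_sq: assumes "\<forall>k\<ge>2. d k > 0"
  shows "sprod d n * sprod d n = (\<Prod>j=2..Suc n. d j)"
proof (induction n)
  case 0 then show ?case by (simp add: sprod_def)
next
  case (Suc n)
  have "d (n+2) > 0" using assms by auto
  then show ?case using Suc by (simp add: sprod_Suc Dprod_Suc algebra_simps)
qed

lemma step:
  fixes a b sq s D p0 p1 q0 q1 H0 e :: complex
  assumes "a \<noteq> 0" "b \<noteq> 0" "s \<noteq> 0" "sq \<noteq> 0" "s*s = D" "e = 1 \<or> e = -1"
  shows "H0/(a^m*b^m*D) + (-e)*q1/(b^(Suc m)*(s*sq)) * ((-e)*p1/(a^(Suc m)*(s*sq)))
     + sq*( e*q0/(b^m*s) * ((-e)*p1/(a^(Suc m)*(s*sq))) + (-e)*q1/(b^(Suc m)*(s*sq)) * (e*p0/(a^m * s)) )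
   = (sq*sq*a*b*H0 + p1*q1 - sq*sq*(b*q0*p1 + a*p0*q1))/(a^(Suc m)*b^(Suc m)*(sq*sq*D))"
proof -
  from assms(6) show ?thesis
  proof
    assume "e = 1" then show ?thesis using assms(1-4) unfolding assms(5)[symmetric]
      by (simp add: field_simps power_Suc) algebra
  next
    assume "e = -1" then show ?thesis using assms(1-4) unfolding assms(5)[symmetric]
      by (simp add: field_simps power_Suc) algebra
  qed
qed

definition QS :: "(nat \<Rightarrow> real) \<Rightarrow> (nat \<Rightarrow> real) \<Rightarrow> nat \<Rightarrow> real \<Rightarrow> real \<Rightarrow> complex" where
  "QS c d n x y = (\<Sum>k<n. \<Sum>l<n. cnj (uf c d k y) * (bb d k l * uf c d l x))"

lemma Q_formula:
  fixes H :: "nat \<Rightarrow> complex" and p q :: "nat \<Rightarrow> complex"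
  assumes dpos: "\<forall>k\<ge>2. d k > 0"
  and p_def: "p = (\<lambda>k. complex_of_real (poly (Ppoly c d k) x))"
  and q_def: "q = (\<lambda>k. complex_of_real (poly (Ppoly c d k) y))"
  and H1: "H 1 = 1"
  and Hrec: "\<And>m. m \<ge> 1 \<Longrightarrow> H (Suc m) = complex_of_real (d (m+1)) * (complex_of_real x - \<i>) * (complex_of_real y + \<i>) * H m
      + p m * q m - complex_of_real (d (m+1)) * ((complex_of_real y + \<i>) * q (m-1) * p m + (complex_of_real x - \<i>) * p (m-1) * q m)"
  shows "QS c d (Suc m) x y = H (Suc m) / ((complex_of_real x - \<i>)^m * (complex_of_real y + \<i>)^m
            * complex_of_real (\<Prod>j=2..Suc m. d j))"
proof (induction m)
  case 0
  have "QS c d 1 x y = 1" unfolding QS_def Q_1 by (simp add: uf_def bb_def)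
  then show ?case using H1 by simp
next
  case (Suc m)
  define a where "a = complex_of_real x - \<i>"
  define b where "b = complex_of_real y + \<i>"
  define e :: complex where "e = (-1)^m"
  define s where "s = complex_of_real (sprod d m)"
  define sq where "sq = complex_of_real (sqrt (d (m+2)))"
  define D where "D = complex_of_real (\<Prod>j=2..Suc m. d j)"
  have a0: "a \<noteq> 0" unfolding a_def by (simp add: complex_eq_iff)
  have b0: "b \<noteq> 0" unfolding b_def by (simp add: complex_eq_iff)
  have dm: "d (m+2) > 0" using dpos by auto
  have sq0: "sq \<noteq> 0" using dm unfolding sq_def by simp
  have sqsq0: "sqrt (d (m+2)) * sqrt (d (m+2)) = d (m+2)" using dm by simp
  have sqsq: "sq * sq = complex_of_real (d (m+2))" unfolding sq_def of_real_mult[symmetric] sqsq0 ..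
  have sD0: "sprod d m * sprod d m = (\<Prod>j=2..Suc m. d j)" by (rule sprod_sq[OF dpos])
  have sD: "s * s = D" unfolding s_def D_def of_real_mult[symmetric] sD0 ..
  have s0: "s \<noteq> 0" proof assume "s = 0" then have "D = 0" using sD by simp
    moreover have "(\<Prod>j=2..Suc m. d j) > 0" by (rule prod_pos) (use dpos in auto)
    ultimately show False unfolding D_def by simp
  qed
  have e1: "e = 1 \<or> e = -1" unfolding e_def by (cases "even m") auto
  have rec: "QS c d (Suc (Suc m)) x y = QS c d (Suc m) x y + cnj (uf c d (Suc m) y) * uf c d (Suc m) x
     + sq * (cnj (uf c d m y) * uf c d (Suc m) x + cnj (uf c d (Suc m) y) * uf c d m x)"
    unfolding QS_def sq_def using QS_rec[of "Suc m"] by simp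
  have u1: "uf c d (Suc m) x = (-e)*p (Suc m)/(a^(Suc m)*(s*sq))"
    by (simp add: uf_eq sprod_Suc a_def e_def s_def sq_def p_def)
  have u2: "cnj (uf c d (Suc m) y) = (-e)*q (Suc m)/(b^(Suc m)*(s*sq))"
    by (simp add: uf_cnj sprod_Suc b_def e_def s_def sq_def q_def)
  have u3: "uf c d m x = e*p m/(a^m*s)"
    by (simp add: uf_eq a_def e_def s_def p_def)
  have u4: "cnj (uf c d m y) = e*q m/(b^m*s)"
    by (simp add: uf_cnj b_def e_def s_def q_def)
  have DD: "complex_of_real (\<Prod>j=2..Suc (Suc m). d j) = sq*sq*D"
    unfolding Dprod_Suc D_def sqsq by simp
  have HH: "H (Suc (Suc m)) = sq*sq*a*b*H (Suc m) + p (Suc m) * q (Suc m)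
      - sq*sq*(b*q m*p (Suc m) + a*p m*q (Suc m))"
    using Hrec[of "Suc m"] unfolding sqsq a_def b_def by (simp add: add_ac)
  have IH: "QS c d (Suc m) x y = H (Suc m) / (a^m*b^m*D)" using Suc unfolding a_def b_def D_def .
  show ?case unfolding rec u1 u2 u3 u4 DD HH IH
    unfolding a_def[symmetric] b_def[symmetric]
    by (rule step[OF a0 b0 s0 sq0 sD e1])
qed



lemma Galg:
  fixes x y dd cc p0 p1 q0 q1 G0 G1 :: real
  assumes "x \<noteq> y" "G0*(x-y) = p1*q0 - p0*q1"
    "G1*(x-y) = ((x-cc)*p1 - dd*(x^2+1)*p0)*q1 - p1*((y-cc)*q1 - dd*(y^2+1)*q0)"
  shows "G1 = dd*(x*y+1)*G0 + p1*q1 - dd*(y*q0*p1 + x*p0*q1)"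
proof -
  have "(dd*(x*y+1)*G0 + p1*q1 - dd*(y*q0*p1 + x*p0*q1))*(x-y)
      = dd*(x*y+1)*(G0*(x-y)) + (p1*q1 - dd*(y*q0*p1 + x*p0*q1))*(x-y)" by (simp add: algebra_simps)
  also have "\<dots> = G1*(x-y)" unfolding assms(2) assms(3) by (simp add: algebra_simps power2_eq_square)
  finally show ?thesis using assms(1) by simp
qed

lemma Gfun_mul: "x \<noteq> y \<Longrightarrow> Gfun c d n x y * (x - y) = poly (Ppoly c d n) x * poly (Ppoly c d (n-1)) y
      - poly (Ppoly c d (n-1)) x * poly (Ppoly c d n) y"
  by (simp add: Gfun_def)

lemma Gfun_rec:
  assumes "x \<noteq> y"
  shows "complex_of_real (Gfun c d (Suc (Suc k)) x y) =
    complex_of_real (d (Suc k+1)) * (complex_of_real x - \<i>) * (complex_of_real y + \<i>) * complex_of_real (Gfun c d (Suc k) x y)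
      + complex_of_real (poly (Ppoly c d (Suc k)) x) * complex_of_real (poly (Ppoly c d (Suc k)) y)
      - complex_of_real (d (Suc k+1)) * ((complex_of_real y + \<i>) * complex_of_real (poly (Ppoly c d (Suc k-1)) y) * complex_of_real (poly (Ppoly c d (Suc k)) x)
         + (complex_of_real x - \<i>) * complex_of_real (poly (Ppoly c d (Suc k-1)) x) * complex_of_real (poly (Ppoly c d (Suc k)) y))"
proof -
  let ?p0 = "poly (Ppoly c d k) x" and ?p1 = "poly (Ppoly c d (Suc k)) x"
  let ?q0 = "poly (Ppoly c d k) y" and ?q1 = "poly (Ppoly c d (Suc k)) y"
  have h0: "Gfun c d (Suc k) x y * (x-y) = ?p1*?q0 - ?p0*?q1" using Gfun_mul[OF assms, of c d "Suc k"] by simp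
  have h1: "Gfun c d (Suc (Suc k)) x y * (x-y) = ((x - c (k+2))*?p1 - d (k+2)*(x^2+1)*?p0)*?q1 - ?p1*((y - c (k+2))*?q1 - d (k+2)*(y^2+1)*?q0)"
    using Gfun_mul[OF assms, of c d "Suc (Suc k)"] by (simp add: algebra_simps power2_eq_square)
  have R: "Gfun c d (Suc (Suc k)) x y = d (k+2)*(x*y+1)*Gfun c d (Suc k) x y + ?p1*?q1 - d (k+2)*(y*?q0*?p1 + x*?p0*?q1)"
    by (rule Galg[OF assms h0 h1])
  have I: "d (k+2) * ((x-y)*Gfun c d (Suc k) x y - (?q0*?p1 - ?p0*?q1)) = 0"
    using h0 by (simp add: algebra_simps)
  show ?thesis
    apply (rule complex_eqI)
    subgoal using R by (simp add: algebra_simps)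
    subgoal using I by (simp add: algebra_simps)
    done
qed

lemma Gcal_rec:
  "complex_of_real (Gcal c d (Suc (Suc k)) x) =
    complex_of_real (d (Suc k+1)) * (complex_of_real x - \<i>) * (complex_of_real x + \<i>) * complex_of_real (Gcal c d (Suc k) x)
      + complex_of_real (poly (Ppoly c d (Suc k)) x) * complex_of_real (poly (Ppoly c d (Suc k)) x)
      - complex_of_real (d (Suc k+1)) * ((complex_of_real x + \<i>) * complex_of_real (poly (Ppoly c d (Suc k-1)) x) * complex_of_real (poly (Ppoly c d (Suc k)) x)
         + (complex_of_real x - \<i>) * complex_of_real (poly (Ppoly c d (Suc k-1)) x) * complex_of_real (poly (Ppoly c d (Suc k)) x))"
proof -
  have R: "Gcal c d (Suc (Suc k)) x = d (k+2)*(x^2+1)*Gcal c d (Suc k) x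
     + poly (Ppoly c d (Suc k)) x * poly (Ppoly c d (Suc k)) x - 2*x*d (k+2)*poly (Ppoly c d k) x * poly (Ppoly c d (Suc k)) x"
  proof -
    have D: "poly (pderiv (Ppoly c d (Suc (Suc k)))) x = poly (Ppoly c d (Suc k)) x
      + (x - c (k+2)) * poly (pderiv (Ppoly c d (Suc k))) x
      - d (k+2) * (2*x*poly (Ppoly c d k) x + (x^2+1)*poly (pderiv (Ppoly c d k)) x)"
      apply (simp only: Ppoly.simps pderiv_diff pderiv_mult pderiv_smult)
      apply (simp add: pderiv_pCons algebra_simps power2_eq_square)
      done
    have P: "poly (Ppoly c d (Suc (Suc k))) x = (x - c (k+2)) * poly (Ppoly c d (Suc k)) x
        - d (k+2) * (x^2+1) * poly (Ppoly c d k) x"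
      by (simp add: algebra_simps power2_eq_square)
    show ?thesis unfolding Gcal_def D P by (simp add: algebra_simps power2_eq_square)
  qed
  show ?thesis
    apply (rule complex_eqI)
    subgoal using R by (simp add: algebra_simps power2_eq_square)
    subgoal by (simp add: algebra_simps)
    done
qed




lemma pos_step:
  fixes R ur ui vr vi G1 G2 :: real
  assumes "R - (1-G1)*(ur^2+ui^2) \<ge> 0" "R > 0" "0 \<le> G1" "G1 < 1" "0 < G2" "G2 < 1"
  shows "R + (vr^2+vi^2) + 2*(sqrt(1-G1)*sqrt G2)*(ur*vr+ui*vi) - (1-G2)*(vr^2+vi^2) \<ge> 0
       \<and> R + (vr^2+vi^2) + 2*(sqrt(1-G1)*sqrt G2)*(ur*vr+ui*vi) > 0"
proof -
  define \<alpha> where "\<alpha> = sqrt (1-G1)"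
  define \<beta> where "\<beta> = sqrt G2"
  have a2: "\<alpha>^2 = 1-G1" unfolding \<alpha>_def using assms by simp
  have b2: "\<beta>^2 = G2" unfolding \<beta>_def using assms by simp
  have s1: "(\<alpha>*ur+\<beta>*vr)^2 = (1-G1)*ur^2 + G2*vr^2 + 2*\<alpha>*\<beta>*(ur*vr)"
    by (simp add: power2_sum power_mult_distrib a2 b2 algebra_simps)
  have s2: "(\<alpha>*ui+\<beta>*vi)^2 = (1-G1)*ui^2 + G2*vi^2 + 2*\<alpha>*\<beta>*(ui*vi)"
    by (simp add: power2_sum power_mult_distrib a2 b2 algebra_simps)
  have eq: "R + (vr^2+vi^2) + 2*(\<alpha>*\<beta>)*(ur*vr+ui*vi) - (1-G2)*(vr^2+vi^2)
     = (R - (1-G1)*(ur^2+ui^2)) + (\<alpha>*ur+\<beta>*vr)^2 + (\<alpha>*ui+\<beta>*vi)^2"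
    unfolding s1 s2 by (simp add: algebra_simps)
  have ge: "R + (vr^2+vi^2) + 2*(\<alpha>*\<beta>)*(ur*vr+ui*vi) - (1-G2)*(vr^2+vi^2) \<ge> 0"
    unfolding eq using assms(1) by (simp add: add_nonneg_nonneg)
  have gt: "R + (vr^2+vi^2) + 2*(\<alpha>*\<beta>)*(ur*vr+ui*vi) > 0"
  proof (cases "vr^2+vi^2 > 0")
    case True
    have "(1-G2)*(vr^2+vi^2) > 0" using True assms by simp
    then show ?thesis using ge by linarith
  next
    case False
    then have "vr^2 + vi^2 = 0" by (smt (verit) zero_le_power2)
    then have "vr = 0" "vi = 0" by (simp_all add: sum_power2_eq_zero_iff)
    then show ?thesis using assms by simp
  qed
  show ?thesis using ge gt unfolding \<alpha>_def \<beta>_def by simp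
qed

lemma QS1': "QS c d 1 x y = 1"
  unfolding QS_def Q_1 by (simp add: uf_def bb_def)

lemma QS1: "QS c d (Suc 0) x y = 1"
  using QS1'[of c d x y] by (simp only: One_nat_def)

lemma QS_pos:
  assumes g1: "0 \<le> g 1" "g 1 < 1" and g2: "\<forall>n\<ge>2. 0 < g n \<and> g n < 1"
    and gd: "\<forall>n\<ge>1. d (n+1) = (1 - g n) * g (n+1)"
  shows "Re (QS c d (Suc m) x x) - (1 - g (Suc m)) * (cmod (uf c d m x))^2 \<ge> 0
       \<and> Re (QS c d (Suc m) x x) > 0"
proof (induction m)
  case 0
  then show ?case using g1 by (simp add: QS1 uf_def)
next
  case (Suc m)
  define u where "u = uf c d m x"
  define v where "v = uf c d (Suc m) x"
  have rec: "QS c d (Suc (Suc m)) x x = QS c d (Suc m) x x + cnj v * v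
     + complex_of_real (sqrt (d (m+2))) * (cnj u * v + cnj v * u)"
    unfolding QS_def u_def v_def using QS_rec[of "Suc m"] by simp
  have dd: "d (m+2) = (1 - g (Suc m)) * g (Suc (Suc m))" using gd[rule_format, of "Suc m"] by simp
  have G1': "0 \<le> g (Suc m) \<and> g (Suc m) < 1" using g1 g2[rule_format, of "Suc m"] by (cases m) auto
  have G1: "0 \<le> g (Suc m)" "g (Suc m) < 1" using G1' by auto
  have G2: "0 < g (Suc (Suc m))" "g (Suc (Suc m)) < 1" using g2 by auto
  have sq: "sqrt (d (m+2)) = sqrt (1 - g (Suc m)) * sqrt (g (Suc (Suc m)))"
    unfolding dd by (simp add: real_sqrt_mult)
  have ReQ: "Re (QS c d (Suc (Suc m)) x x) = Re (QS c d (Suc m) x x) + ((Re v)^2 + (Im v)^2)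
     + 2*(sqrt (1 - g (Suc m)) * sqrt (g (Suc (Suc m))))*(Re u * Re v + Im u * Im v)"
    unfolding rec sq[symmetric] by (simp add: power2_eq_square algebra_simps)
  have IH: "Re (QS c d (Suc m) x x) - (1 - g (Suc m)) * ((Re u)^2 + (Im u)^2) \<ge> 0"
     "Re (QS c d (Suc m) x x) > 0" using Suc unfolding u_def by (simp_all add: cmod_power2)
  show ?case unfolding ReQ v_def[symmetric] cmod_power2
    using pos_step[OF IH G1 G2] by simp
qed




theorem theorem3p1:
  fixes c d :: "nat \<Rightarrow> real"
  assumes chain: "positive_chain_seq d"
  shows "(\<forall>x y. x \<noteq> y \<longrightarrow> Gfun c d 1 x y = 1)
    \<and> (\<forall>n\<ge>2. \<forall>x y. x \<noteq> y \<longrightarrow>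
          complex_of_real (Gfun c d n x y) /
            ((complex_of_real x - \<i>)^(n-1) * (complex_of_real y + \<i>)^(n-1)
              * complex_of_real (\<Prod>j=2..n. d j))
          = conjugate (uvec c d n y) \<bullet> (Bmat d n *\<^sub>v uvec c d n x))
    \<and> (\<forall>n\<ge>2. \<forall>x.
          complex_of_real (Gcal c d n x / ((x^2 + 1)^(n-1) * (\<Prod>j=2..n. d j)))
            = conjugate (uvec c d n x) \<bullet> (Bmat d n *\<^sub>v uvec c d n x)
        \<and> Gcal c d n x / ((x^2 + 1)^(n-1) * (\<Prod>j=2..n. d j)) > 0)"
proof -
  obtain g :: "nat \<Rightarrow> real" where g1: "0 \<le> g 1" "g 1 < 1" and g2: "\<forall>n\<ge>2. 0 < g n \<and> g n < 1"
    and gd: "\<forall>n\<ge>1. d (n+1) = (1 - g n) * g (n+1)"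
    using chain unfolding positive_chain_seq_def by blast
  have dpos: "\<forall>k\<ge>2. d k > 0"
  proof (intro allI impI)
    fix k :: nat assume k: "k \<ge> 2"
    then obtain n where n: "k = n + 1" "n \<ge> 1" by (metis add.commute le_Suc_ex one_add_one add_le_cancel_left le_add2 order_trans)
    have "1 - g n > 0" using g1 g2 n(2) by (cases "n = 1") auto
    moreover have "g (n+1) > 0" using g2 n(2) by auto
    ultimately show "d k > 0" using gd n by simp
  qed
  have P1: "\<forall>x y. x \<noteq> y \<longrightarrow> Gfun c d 1 x y = 1"
    by (auto simp: Gfun_def)
  have P2: "\<forall>n\<ge>2. \<forall>x y. x \<noteq> y \<longrightarrow>
          complex_of_real (Gfun c d n x y) /
            ((complex_of_real x - \<i>)^(n-1) * (complex_of_real y + \<i>)^(n-1)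
              * complex_of_real (\<Prod>j=2..n. d j))
          = conjugate (uvec c d n y) \<bullet> (Bmat d n *\<^sub>v uvec c d n x)"
  proof (intro allI impI)
    fix n :: nat and x y :: real assume n: "n \<ge> 2" and xy: "x \<noteq> y"
    then obtain m where m: "n = Suc m" by (cases n) auto
    have "QS c d (Suc m) x y = complex_of_real (Gfun c d (Suc m) x y) / ((complex_of_real x - \<i>)^m * (complex_of_real y + \<i>)^m
            * complex_of_real (\<Prod>j=2..Suc m. d j))"
      apply (rule Q_formula[OF dpos refl refl])
      using P1 xy apply simp
      subgoal for k
        apply (cases k)
         apply simp
        apply (simp only:)
        apply (rule Gfun_rec[OF xy])
        done
      done
    then show "complex_of_real (Gfun c d n x y) /
            ((complex_of_real x - \<i>)^(n-1) * (complex_of_real y + \<i>)^(n-1)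
              * complex_of_real (\<Prod>j=2..n. d j))
          = conjugate (uvec c d n y) \<bullet> (Bmat d n *\<^sub>v uvec c d n x)"
      unfolding Q_sum m QS_def[symmetric] by simp
  qed
  have P3: "\<forall>n\<ge>2. \<forall>x.
          complex_of_real (Gcal c d n x / ((x^2 + 1)^(n-1) * (\<Prod>j=2..n. d j)))
            = conjugate (uvec c d n x) \<bullet> (Bmat d n *\<^sub>v uvec c d n x)
        \<and> Gcal c d n x / ((x^2 + 1)^(n-1) * (\<Prod>j=2..n. d j)) > 0"
  proof (intro allI impI)
    fix n :: nat and x :: real assume n: "n \<ge> 2"
    then obtain m where m: "n = Suc m" by (cases n) auto
    have Q: "QS c d (Suc m) x x = complex_of_real (Gcal c d (Suc m) x) / ((complex_of_real x - \<i>)^m * (complex_of_real x + \<i>)^m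
            * complex_of_real (\<Prod>j=2..Suc m. d j))"
      apply (rule Q_formula[OF dpos refl refl])
       apply (simp add: Gcal_def pderiv_pCons)
      subgoal for k
        apply (cases k)
         apply simp
        apply (simp only:)
        apply (rule Gcal_rec)
        done
      done
    have ab: "(complex_of_real x - \<i>)^m * (complex_of_real x + \<i>)^m = complex_of_real ((x^2+1)^m)"
    proof -
      have "(complex_of_real x - \<i>) * (complex_of_real x + \<i>) = complex_of_real (x^2+1)"
        by (simp add: complex_eq_iff power2_eq_square)
      then show ?thesis by (metis of_real_power power_mult_distrib)
    qed
    have E: "complex_of_real (Gcal c d n x / ((x^2 + 1)^(n-1) * (\<Prod>j=2..n. d j))) = QS c d n x x"
      unfolding Q m ab by simp
    have "Re (QS c d (Suc m) x x) > 0" using QS_pos[OF g1 g2 gd, of c m x] by simp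
    then have "Gcal c d n x / ((x^2 + 1)^(n-1) * (\<Prod>j=2..n. d j)) > 0"
      using arg_cong[OF E, of Re] m by simp
    then show "complex_of_real (Gcal c d n x / ((x^2 + 1)^(n-1) * (\<Prod>j=2..n. d j)))
            = conjugate (uvec c d n x) \<bullet> (Bmat d n *\<^sub>v uvec c d n x)
        \<and> Gcal c d n x / ((x^2 + 1)^(n-1) * (\<Prod>j=2..n. d j)) > 0"
      using E unfolding Q_sum QS_def[symmetric] by simp
  qed
  show ?thesis using P1 P2 P3 by blast
qed


end
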